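(* Let $G$ be a connected bipartite graph on $n$ vertices and $m$ edges with incidence matrix $M$, and let $J=[(-1)^{d(i,j)}]$ be the $n\times n$ matrix whose $(i,j)$-entry is $(-1)^{d(i,j)}$. Then $M^+J=O_{m,n}$ and $J^2=nJ$.
   Context: The incidence matrix $M$ is the $n\times m$ matrix with $(i,j)$-entry $1$ if vertex $i$ is incident with edge $e_j$ and $0$ otherwise; $M^+$ is its Moore-Penrose inverse (the unique matrix with $MM^+M=M$, $M^+MM^+=M^+$, $(MM^+)^T=MM^+$, $(M^+M)^T=M^+M$). $d(i,j)$ is the graph distance; $O_{m,n}$ is the $m\times n$ zero matrix. *)

theory Defs
  imports "Jordan_Normal_Form.Matrix"
begin

definition simple_graph :: "nat \<Rightarrow> nat set list \<Rightarrow> bool" where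
  "simple_graph n es \<longleftrightarrow> distinct es \<and>
     (\<forall>e\<in>set es. \<exists>u v. u < n \<and> v < n \<and> u \<noteq> v \<and> e = {u, v})"

definition adj :: "nat set list \<Rightarrow> nat \<Rightarrow> nat \<Rightarrow> bool" where
  "adj es u v \<longleftrightarrow> {u, v} \<in> set es"

definition walk_len :: "nat set list \<Rightarrow> nat \<Rightarrow> nat \<Rightarrow> nat \<Rightarrow> bool" where
  "walk_len es u v k \<longleftrightarrow> (\<exists>xs. length xs = Suc k \<and> hd xs = u \<and> last xs = v \<and>
     (\<forall>i<k. adj es (xs ! i) (xs ! Suc i)))"

definition connected_graph :: "nat \<Rightarrow> nat set list \<Rightarrow> bool" where
  "connected_graph n es \<longleftrightarrow> (\<forall>u<n. \<forall>v<n. \<exists>k. walk_len es u v k)"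

definition bipartite_graph :: "nat set list \<Rightarrow> bool" where
  "bipartite_graph es \<longleftrightarrow> (\<exists>c :: nat \<Rightarrow> bool. \<forall>u v. adj es u v \<longrightarrow> c u \<noteq> c v)"

definition gdist :: "nat set list \<Rightarrow> nat \<Rightarrow> nat \<Rightarrow> nat" where
  "gdist es u v = (LEAST k. walk_len es u v k)"

definition incidence_mat :: "nat \<Rightarrow> nat set list \<Rightarrow> real mat" where
  "incidence_mat n es = mat n (length es) (\<lambda>(i, j). if i \<in> es ! j then 1 else 0)"

definition sign_dist_mat :: "nat \<Rightarrow> nat set list \<Rightarrow> real mat" where
  "sign_dist_mat n es = mat n n (\<lambda>(i, j). (-1) ^ gdist es i j)"

definition is_MP_inverse :: "real mat \<Rightarrow> real mat \<Rightarrow> bool" where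
  "is_MP_inverse A X \<longleftrightarrow> X \<in> carrier_mat (dim_col A) (dim_row A) \<and>
     A * X * A = A \<and> X * A * X = X \<and>
     transpose_mat (A * X) = A * X \<and> transpose_mat (X * A) = X * A"

definition MP_inverse :: "real mat \<Rightarrow> real mat" where
  "MP_inverse A = (THE X. is_MP_inverse A X)"

end

theory Submission
  imports Defs "Jordan_Normal_Form.Determinant"
begin

lemma assoc': "dim_col A = dim_row B \<Longrightarrow> dim_col B = dim_row C \<Longrightarrow> (A::'a::semiring_0 mat) * B * C = A * (B * C)"
  by (rule assoc_mult_mat[of A "dim_row A" "dim_col A" B "dim_col B" C "dim_col C"]) auto

lemma tmult': "dim_col A = dim_row B \<Longrightarrow> transpose_mat ((A::'a::comm_semiring_0 mat) * B) = transpose_mat B * transpose_mat A"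
  by (rule transpose_mult[of A "dim_row A" "dim_col A" B "dim_col B"]) auto

lemma assoc_vec': "dim_col A = dim_row B \<Longrightarrow> dim_col B = dim_vec v \<Longrightarrow> ((A::'a::semiring_0 mat) * B) *\<^sub>v v = A *\<^sub>v (B *\<^sub>v v)"
  by (rule assoc_mult_mat_vec[of A "dim_row A" "dim_col A" B "dim_col B" v]) auto

lemma self_scalar_zero: fixes v :: "real vec" assumes "v \<bullet> v = 0" shows "v = 0\<^sub>v (dim_vec v)"
proof -
  from assms have "(\<Sum>i\<in>{0..<dim_vec v}. v $ i * v $ i) = 0" by (simp add: scalar_prod_def)
  hence "\<forall>i\<in>{0..<dim_vec v}. v $ i * v $ i = 0" by (subst sum_nonneg_eq_0_iff[symmetric]) auto
  thus ?thesis by (intro eq_vecI) auto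
qed

lemma gram_inj: fixes B :: "real mat"
  assumes B: "B \<in> carrier_mat n r" and x: "x \<in> carrier_vec r" and z: "(transpose_mat B * B) *\<^sub>v x = 0\<^sub>v r"
  shows "B *\<^sub>v x = 0\<^sub>v n"
proof -
  have "(transpose_mat B *\<^sub>v (B *\<^sub>v x)) \<bullet> x = (B *\<^sub>v x) \<bullet> (B *\<^sub>v x)"
    by (rule transpose_vec_mult_scalar[OF B x]) (use B x in auto)
  moreover have "transpose_mat B *\<^sub>v (B *\<^sub>v x) = 0\<^sub>v r" using z B x by (simp add: assoc_vec')
  ultimately have "(B *\<^sub>v x) \<bullet> (B *\<^sub>v x) = 0" using x by simp
  from self_scalar_zero[OF this] show ?thesis using B by simp
qed

lemma inv_ex: fixes A :: "real mat"
  assumes A: "A \<in> carrier_mat n n" and inj: "\<And>v. v \<in> carrier_vec n \<Longrightarrow> A *\<^sub>v v = 0\<^sub>v n \<Longrightarrow> v = 0\<^sub>v n"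
  shows "\<exists>B \<in> carrier_mat n n. A * B = 1\<^sub>m n \<and> B * A = 1\<^sub>m n"
proof -
  have "det A \<noteq> 0" using det_0_iff_vec_prod_zero[OF A] inj by blast
  from det_non_zero_imp_unit[OF A this, of "()"] show ?thesis
    by (auto simp: Units_def ring_mat_def)
qed

lemma sym_inv: fixes A B :: "real mat"
  assumes A: "A \<in> carrier_mat n n" and B: "B \<in> carrier_mat n n" and s: "transpose_mat A = A"
    and AB: "A * B = 1\<^sub>m n" and BA: "B * A = 1\<^sub>m n"
  shows "transpose_mat B = B"
proof -
  have "transpose_mat B = transpose_mat B * (A * B)" using AB B by simp
  also have "\<dots> = (transpose_mat B * A) * B" using A B by (simp add: assoc')
  also have "transpose_mat B * A = transpose_mat (transpose_mat A * B)" using A B by (simp add: tmult')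
  also have "\<dots> = 1\<^sub>m n" using s AB by simp
  finally show ?thesis using B by simp
qed

lemma MP_unique: fixes A X Y :: "real mat"
  assumes X: "is_MP_inverse A X" and Y: "is_MP_inverse A Y"
  shows "X = Y"
proof -
  obtain n m where A: "A \<in> carrier_mat n m" by blast
  have Xc: "X \<in> carrier_mat m n" and Yc: "Y \<in> carrier_mat m n" using X Y A unfolding is_MP_inverse_def by auto
  note d = carrier_matD[OF A] carrier_matD[OF Xc] carrier_matD[OF Yc]
  note x = X[unfolded is_MP_inverse_def] and y = Y[unfolded is_MP_inverse_def]
  have "X = X * (A * X)" using x d by (simp add: assoc')
  also have "\<dots> = X * (transpose_mat X * transpose_mat A)" using x d by (metis tmult')
  also have "transpose_mat A = transpose_mat (A * Y * A)" using y by simp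
  also have "\<dots> = transpose_mat A * (transpose_mat Y * transpose_mat A)" using d by (simp add: tmult' assoc')
  also have "X * (transpose_mat X * (transpose_mat A * (transpose_mat Y * transpose_mat A))) 
     = X * (transpose_mat (A * X) * transpose_mat (A * Y))" using d by (simp add: tmult' assoc')
  also have "\<dots> = X * (A * (X * (A * Y)))" using x y d by (simp add: assoc')
  also have "\<dots> = (X * (A * X)) * (A * Y)" using d by (simp add: assoc')
  also have "\<dots> = X * A * Y" using x d by (simp add: assoc')
  finally have 1: "X = X * A * Y" .
  have "Y = (Y * A) * Y" using y d by (simp add: assoc')
  also have "\<dots> = transpose_mat A * transpose_mat Y * Y" using y d by (metis tmult')
  also have "transpose_mat A = transpose_mat (A * X * A)" using x by simp
  also have "\<dots> * transpose_mat Y * Y = transpose_mat (X * A) * transpose_mat (Y * A) * Y" using d by (simp add: tmult' assoc')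
  also have "\<dots> = X * A * Y" using x y d by (simp add: assoc')
  finally show ?thesis using 1 by simp
qed


lemma MP_from_fact: fixes A Bm Y E :: "real mat"
  assumes A: "A \<in> carrier_mat n m" and Bm: "Bm \<in> carrier_mat n l" and Y: "Y \<in> carrier_mat l m"
    and E: "E \<in> carrier_mat m l"
    and AY: "A = Bm * Y" and AE: "A * E = Bm"
    and inj: "\<And>v. v \<in> carrier_vec l \<Longrightarrow> Bm *\<^sub>v v = 0\<^sub>v n \<Longrightarrow> v = 0\<^sub>v l"
  shows "\<exists>X. is_MP_inverse A X"
proof -
  note dA = carrier_matD[OF A] and dB = carrier_matD[OF Bm] and dY = carrier_matD[OF Y] and dE = carrier_matD[OF E]
  define H where "H = transpose_mat Bm * Bm"
  have Hc: "H \<in> carrier_mat l l" using dB unfolding H_def by auto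
  have "\<exists>B \<in> carrier_mat l l. H * B = 1\<^sub>m l \<and> B * H = 1\<^sub>m l"
  proof (rule inv_ex[OF Hc])
    fix v assume v: "v \<in> carrier_vec l" "H *\<^sub>v v = 0\<^sub>v l"
    show "v = 0\<^sub>v l" using inj[OF v(1) gram_inj[OF Bm v(1)]] v unfolding H_def by auto
  qed
  then obtain Hi where Hi: "Hi \<in> carrier_mat l l" "H * Hi = 1\<^sub>m l" "Hi * H = 1\<^sub>m l" by blast
  note dHi = carrier_matD[OF Hi(1)]
  have HiT: "transpose_mat Hi = Hi"
    by (rule sym_inv[OF Hc Hi(1) _ Hi(2,3)]) (use dB in \<open>simp add: H_def tmult'\<close>)
  have HiL: "Hi * (transpose_mat Bm * (Bm * Z)) = Z" if "dim_row Z = l" for Z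
  proof -
    have "Hi * (transpose_mat Bm * (Bm * Z)) = (Hi * H) * Z" using dB dHi that by (simp add: H_def assoc')
    thus ?thesis using Hi that by simp
  qed
  define C where "C = Hi * transpose_mat Bm * A"
  have dC: "dim_row C = l" "dim_col C = m" using dHi dA unfolding C_def by auto
  have BC: "Bm * C = A"
  proof -
    have "C = Y" unfolding C_def using dHi dB dY by (subst AY) (simp add: assoc' HiL)
    thus ?thesis using AY by simp
  qed
  have CE: "C * E = 1\<^sub>m l"
    unfolding C_def using dHi dB dA dE by (simp add: assoc' AE Hi(3)[unfolded H_def])
  define K where "K = C * transpose_mat C"
  have Kc: "K \<in> carrier_mat l l" using dC unfolding K_def by auto
  have "\<exists>B \<in> carrier_mat l l. K * B = 1\<^sub>m l \<and> B * K = 1\<^sub>m l"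
  proof (rule inv_ex[OF Kc])
    fix v assume v: "v \<in> carrier_vec l" "K *\<^sub>v v = 0\<^sub>v l"
    have Ct: "transpose_mat C \<in> carrier_mat m l" using dC by auto
    have "transpose_mat C *\<^sub>v v = 0\<^sub>v m" by (rule gram_inj[OF Ct v(1)]) (use v in \<open>simp add: K_def\<close>)
    hence "transpose_mat E *\<^sub>v (transpose_mat C *\<^sub>v v) = 0\<^sub>v l" using dE by auto
    moreover have "transpose_mat E *\<^sub>v (transpose_mat C *\<^sub>v v) = transpose_mat (C * E) *\<^sub>v v"
      using dE dC v by (simp add: tmult' assoc_vec')
    ultimately show "v = 0\<^sub>v l" using CE v by simp
  qed
  then obtain Ki where Ki: "Ki \<in> carrier_mat l l" "K * Ki = 1\<^sub>m l" "Ki * K = 1\<^sub>m l" by blast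
  note dKi = carrier_matD[OF Ki(1)]
  have KiT: "transpose_mat Ki = Ki"
    by (rule sym_inv[OF Kc Ki(1) _ Ki(2,3)]) (use dC in \<open>simp add: K_def tmult'\<close>)
  have KiL: "C * (transpose_mat C * (Ki * Z)) = Z" if "dim_row Z = l" for Z
  proof -
    have "C * (transpose_mat C * (Ki * Z)) = (K * Ki) * Z" using dC dKi that by (simp add: K_def assoc')
    thus ?thesis using Ki that by simp
  qed
  define X where "X = transpose_mat C * Ki * Hi * transpose_mat Bm"
  have AX: "A * X = Bm * (Hi * transpose_mat Bm)"
    unfolding X_def using dC dKi dHi dB by (subst BC[symmetric]) (simp add: assoc' KiL)
  have XA: "X * A = transpose_mat C * (Ki * C)"
    unfolding X_def using dC dKi dHi dB by (subst BC[symmetric]) (simp add: assoc' HiL)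
  have "is_MP_inverse A X"
    unfolding is_MP_inverse_def
  proof (intro conjI)
    show "X \<in> carrier_mat (dim_col A) (dim_row A)" unfolding X_def using dC dKi dHi dB dA by auto
    have "Bm * (Hi * transpose_mat Bm) * (Bm * C) = Bm * C" using dC dKi dHi dB by (simp add: assoc' HiL)
    thus "A * X * A = A" unfolding AX BC .
    show "X * A * X = X" unfolding XA unfolding X_def using dC dKi dHi dB by (simp add: assoc' KiL)
    show "transpose_mat (A * X) = A * X" unfolding AX using dC dKi dHi dB by (simp add: tmult' HiT assoc')
    show "transpose_mat (X * A) = X * A" unfolding XA using dC dKi dHi dB by (simp add: tmult' KiT assoc')
  qed
  thus ?thesis by blast
qed


lemma sum_snoc: "(\<Sum>q<Suc (length js). (A::real mat) $$ (i, (js @ [k]) ! q) * x q)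
   = (\<Sum>q<length js. A $$ (i, js ! q) * x q) + A $$ (i, k) * x (length js)"
  by (simp add: nth_append)

lemma select:
  fixes A :: "real mat"
  shows "\<exists>js. set js \<subseteq> {..<k} \<and>
    (\<forall>x. (\<forall>i<n. (\<Sum>q<length js. A $$ (i, js ! q) * x q) = 0) \<longrightarrow> (\<forall>q<length js. x q = 0)) \<and>
    (\<forall>j<k. \<exists>y. \<forall>i<n. A $$ (i, j) = (\<Sum>q<length js. A $$ (i, js ! q) * y q))"
proof (induction k)
  case 0
  show ?case by (intro exI[of _ "[]"]) auto
next
  case (Suc k)
  from Suc.IH obtain js where jsall: "set js \<subseteq> {..<k} \<and>
    (\<forall>x. (\<forall>i<n. (\<Sum>q<length js. A $$ (i, js ! q) * x q) = 0) \<longrightarrow> (\<forall>q<length js. x q = 0)) \<and>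
    (\<forall>j<k. \<exists>y. \<forall>i<n. A $$ (i, j) = (\<Sum>q<length js. A $$ (i, js ! q) * y q))" by (rule exE)
  note js = jsall[THEN conjunct1] jsall[THEN conjunct2, THEN conjunct1] jsall[THEN conjunct2, THEN conjunct2]
  show ?case
  proof (cases "\<exists>y. \<forall>i<n. A $$ (i, k) = (\<Sum>q<length js. A $$ (i, js ! q) * y q)")
    case True
    show ?thesis
    proof (intro exI[of _ js] conjI allI impI)
      show "set js \<subseteq> {..<Suc k}" using js(1) by auto
      fix x q assume a: "\<forall>i<n. (\<Sum>q<length js. A $$ (i, js ! q) * x q) = 0" and q: "q < length js"
      have "\<forall>q<length js. x q = 0" using mp[OF spec[OF js(2), of x] a] .
      thus "x q = 0" using q by simp
    next
      fix j assume "j < Suc k"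
      thus "\<exists>y. \<forall>i<n. A $$ (i, j) = (\<Sum>q<length js. A $$ (i, js ! q) * y q)"
        using js(3) True by (cases "j = k") auto
    qed
  next
    case False
    let ?l = "length js"
    show ?thesis
    proof (rule_tac x="js @ [k]" in exI, intro conjI allI impI)
      show "set (js @ [k]) \<subseteq> {..<Suc k}" using js(1) by auto
    next
      fix x q assume x: "\<forall>i<n. (\<Sum>q<length (js @ [k]). A $$ (i, (js @ [k]) ! q) * x q) = 0"
        and q: "q < length (js @ [k])"
      hence x': "\<forall>i<n. (\<Sum>q<?l. A $$ (i, js ! q) * x q) + A $$ (i, k) * x ?l = 0"
        using sum_snoc[where js=js and A=A and k=k and x=x] by simp
      have xl: "x ?l = 0"
      proof (rule ccontr)
        assume ne: "x ?l \<noteq> 0"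
        have "\<forall>i<n. A $$ (i, k) = (\<Sum>q<?l. A $$ (i, js ! q) * (- x q / x ?l))"
        proof (intro allI impI)
          fix i assume "i < n"
          have e0: "(\<Sum>q<?l. A $$ (i, js ! q) * x q) + A $$ (i, k) * x ?l = 0" using x'[rule_format, OF \<open>i < n\<close>] .
          hence e: "(\<Sum>q<?l. A $$ (i, js ! q) * x q) = - A $$ (i, k) * x ?l" by linarith
          have "(\<Sum>q<?l. A $$ (i, js ! q) * (- x q / x ?l)) = - (\<Sum>q<?l. A $$ (i, js ! q) * x q) / x ?l"
            by (simp add: sum_divide_distrib sum_negf)
          also have "\<dots> = A $$ (i, k)" using e ne by simp
          finally show "A $$ (i, k) = (\<Sum>q<?l. A $$ (i, js ! q) * (- x q / x ?l))" by simp
        qed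
        hence "\<exists>y. \<forall>i<n. A $$ (i, k) = (\<Sum>q<?l. A $$ (i, js ! q) * y q)"
          by (rule exI[of _ "\<lambda>q. - x q / x ?l"])
        with False show False by (rule notE)
      qed
      have x0: "\<forall>i<n. (\<Sum>q<?l. A $$ (i, js ! q) * x q) = 0" using x' xl by simp
      have "\<forall>q<?l. x q = 0" using mp[OF spec[OF js(2), of x] x0] .
      with xl q show "x q = 0" by (auto simp: less_Suc_eq)
    next
      fix j assume j: "j < Suc k"
      show "\<exists>y. \<forall>i<n. A $$ (i, j) = (\<Sum>q<length (js @ [k]). A $$ (i, (js @ [k]) ! q) * y q)"
      proof (cases "j = k")
        case True
        show ?thesis
          by (intro exI[of _ "\<lambda>q. if q = ?l then 1 else 0"] allI impI) (simp add: sum_snoc[simplified] True)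
      next
        case False
        have jk: "j < k" using j False by simp
        from js(3)[rule_format, OF jk] obtain y where y: "\<forall>i<n. A $$ (i, j) = (\<Sum>q<?l. A $$ (i, js ! q) * y q)" by (rule exE)
        have "(\<Sum>q<?l. A $$ (i, js ! q) * (y(?l := 0)) q) = (\<Sum>q<?l. A $$ (i, js ! q) * y q)" for i
          by (rule sum.cong) auto
        thus ?thesis using y
          by (intro exI[of _ "y(?l := 0)"] allI impI) (simp add: sum_snoc[simplified])
      qed
    qed
  qed
qed

lemma MP_exists: fixes A :: "real mat" shows "\<exists>X. is_MP_inverse A X"
proof -
  define n m where "n = dim_row A" and "m = dim_col A"
  have A: "A \<in> carrier_mat n m" unfolding n_def m_def by auto
  obtain js where js: "set js \<subseteq> {..<m}"
    "\<forall>x. (\<forall>i<n. (\<Sum>q<length js. A $$ (i, js ! q) * x q) = 0) \<longrightarrow> (\<forall>q<length js. x q = 0)"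
    "\<forall>j<m. \<exists>y. \<forall>i<n. A $$ (i, j) = (\<Sum>q<length js. A $$ (i, js ! q) * y q)"
    using select[where k=m and A=A and n=n] by blast
  define l where "l = length js"
  from js(3) obtain yf where yf: "\<forall>j<m. \<forall>i<n. A $$ (i, j) = (\<Sum>q<l. A $$ (i, js ! q) * yf j q)"
    unfolding l_def by metis
  define Bm where "Bm = mat n l (\<lambda>(i,q). A $$ (i, js ! q))"
  define Y where "Y = mat l m (\<lambda>(q,j). yf j q)"
  define E where "E = mat m l (\<lambda>(p,q). if p = js ! q then (1::real) else 0)"
  show ?thesis
  proof (rule MP_from_fact[OF A, of Bm l Y E])
    show "Bm \<in> carrier_mat n l" "Y \<in> carrier_mat l m" "E \<in> carrier_mat m l" unfolding Bm_def Y_def E_def by auto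
    show "A = Bm * Y"
    proof (rule eq_matI)
      fix i j assume ij: "i < dim_row (Bm * Y)" "j < dim_col (Bm * Y)"
      have im: "i < n" and jm: "j < m" using ij unfolding Bm_def Y_def by auto
      have "(Bm * Y) $$ (i, j) = (\<Sum>q\<in>{0..<l}. A $$ (i, js ! q) * yf j q)"
        using ij unfolding Bm_def Y_def by (simp add: scalar_prod_def)
      also have "\<dots> = (\<Sum>q<l. A $$ (i, js ! q) * yf j q)"
        by (simp add: atLeast0LessThan)
      also have "\<dots> = A $$ (i, j)" using yf[rule_format, OF jm im] by simp
      finally show "A $$ (i, j) = (Bm * Y) $$ (i, j)" by simp
    qed (auto simp: Bm_def Y_def n_def m_def)
    show "A * E = Bm"
    proof (rule eq_matI)
      fix i q assume iq: "i < dim_row Bm" "q < dim_col Bm"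
      hence jq: "js ! q < m" proof -
        have "q < length js" using iq unfolding Bm_def l_def by simp
        hence "js ! q \<in> set js" by (rule nth_mem)
        thus ?thesis using js(1) by blast
      qed
      have "(A * E) $$ (i, q) = (\<Sum>p\<in>{0..<m}. A $$ (i, p) * (if p = js ! q then 1 else 0))"
        using iq unfolding Bm_def E_def by (simp add: scalar_prod_def n_def m_def)
      also have "\<dots> = A $$ (i, js ! q)" using jq by (simp add: if_distrib cong: if_cong)
      finally show "(A * E) $$ (i, q) = Bm $$ (i, q)" using iq unfolding Bm_def by simp
    qed (auto simp: Bm_def E_def n_def m_def)
    fix v assume v: "v \<in> carrier_vec l" "Bm *\<^sub>v v = 0\<^sub>v n"
    have "\<forall>i<n. (\<Sum>q<l. A $$ (i, js ! q) * v $ q) = 0"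
    proof (intro allI impI)
      fix i assume i: "i < n"
      have "(Bm *\<^sub>v v) $ i = (\<Sum>q\<in>{0..<l}. A $$ (i, js ! q) * v $ q)"
        using i v(1) unfolding Bm_def by (simp add: scalar_prod_def)
      thus "(\<Sum>q<l. A $$ (i, js ! q) * v $ q) = 0" using v(2) i by (simp add: atLeast0LessThan)
    qed
    with js(2) have "\<forall>q<l. v $ q = 0" unfolding l_def by blast
    thus "v = 0\<^sub>v l" using v(1) by (intro eq_vecI) auto
  qed
qed


lemma MP_inverse_prop: "is_MP_inverse A (MP_inverse A)"
proof -
  obtain X where X: "is_MP_inverse A X" using MP_exists by blast
  show ?thesis unfolding MP_inverse_def by (rule theI[of _ X]) (rule X, erule MP_unique[OF _ X])
qed

lemma mat_vec_zero': "dim_col (A::real mat) = nc \<Longrightarrow> A *\<^sub>v 0\<^sub>v nc = 0\<^sub>v (dim_row A)"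
  by (intro eq_vecI) (auto simp: scalar_prod_def)

definition sg :: "(nat \<Rightarrow> bool) \<Rightarrow> nat \<Rightarrow> real" where
  "sg c u = (if c u then 1 else -1)"

lemma sg_sq: "sg c u * sg c u = 1" by (simp add: sg_def)

lemma walk_parity:
  assumes bip: "\<forall>u v. adj es u v \<longrightarrow> c u \<noteq> c v" and w: "walk_len es u v k"
  shows "(-1::real) ^ k = sg c u * sg c v"
proof -
  from w obtain xs where xs: "length xs = Suc k" "hd xs = u" "last xs = v"
    "\<forall>i<k. adj es (xs ! i) (xs ! Suc i)" unfolding walk_len_def by blast
  have par: "l \<le> k \<Longrightarrow> (-1::real) ^ l = sg c (xs ! 0) * sg c (xs ! l)" for l
  proof (induction l)
    case 0 then show ?case using sg_sq by simp
  next
    case (Suc l)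
    hence "adj es (xs ! l) (xs ! Suc l)" using xs(4) by simp
    hence "c (xs ! l) \<noteq> c (xs ! Suc l)" using bip by blast
    hence "sg c (xs ! Suc l) = - sg c (xs ! l)" unfolding sg_def by auto
    thus ?case using Suc by simp
  qed
  have ne: "xs \<noteq> []" using xs(1) by auto
  have "xs ! 0 = u" "xs ! k = v" using xs ne by (simp_all add: hd_conv_nth last_conv_nth)
  with par[of k] show ?thesis by simp
qed

lemma gdist_sign:
  assumes conn: "connected_graph n es" and bip: "\<forall>u v. adj es u v \<longrightarrow> c u \<noteq> c v"
    and i: "i < n" and j: "j < n"
  shows "(-1::real) ^ gdist es i j = sg c i * sg c j"
proof -
  from conn i j obtain k where "walk_len es i j k" unfolding connected_graph_def by blast
  hence "walk_len es i j (gdist es i j)" unfolding gdist_def by (rule LeastI)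
  thus ?thesis by (rule walk_parity[OF bip])
qed

theorem mainTheorem8:
  fixes n :: nat and es :: "nat set list"
  assumes "simple_graph n es" and "connected_graph n es" and "bipartite_graph es"
  shows "MP_inverse (incidence_mat n es) * sign_dist_mat n es = 0\<^sub>m (length es) n
     \<and> sign_dist_mat n es * sign_dist_mat n es = of_nat n \<cdot>\<^sub>m sign_dist_mat n es"
proof -
  from assms(3) obtain c :: "nat \<Rightarrow> bool" where bip: "\<forall>u v. adj es u v \<longrightarrow> c u \<noteq> c v" unfolding bipartite_graph_def by blast
  define m where "m = length es"
  define J where "J = mat n n (\<lambda>(i,j). sg c i * sg c j)"
  have J: "sign_dist_mat n es = J" unfolding J_def sign_dist_mat_def
    by (rule eq_matI) (auto simp: gdist_sign[OF assms(2) bip])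
  define M where "M = incidence_mat n es"
  have Mc: "M \<in> carrier_mat n m" unfolding M_def incidence_mat_def m_def by auto
  define X where "X = MP_inverse M"
  have XP: "is_MP_inverse M X" unfolding X_def by (rule MP_inverse_prop)
  hence Xc: "X \<in> carrier_mat m n" using Mc unfolding is_MP_inverse_def by auto
  note d = carrier_matD[OF Mc] carrier_matD[OF Xc]
  define v where "v = vec n (sg c)"
  have Mv: "transpose_mat M *\<^sub>v v = 0\<^sub>v m"
  proof (rule eq_vecI)
    fix e assume "e < dim_vec (0\<^sub>v m :: real vec)"
    hence e: "e < m" by simp
    hence "es ! e \<in> set es" unfolding m_def by simp
    then obtain a b where ab: "a < n" "b < n" "a \<noteq> b" "es ! e = {a, b}"
      using assms(1) unfolding simple_graph_def by blast
    have "adj es a b" unfolding adj_def using ab \<open>es ! e \<in> set es\<close> by simp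
    hence cab: "c a \<noteq> c b" using bip by blast
    have "(transpose_mat M *\<^sub>v v) $ e = (\<Sum>i\<in>{0..<n}. (if i \<in> es ! e then 1 else 0) * sg c i)"
      using e d unfolding M_def incidence_mat_def v_def m_def by (simp add: scalar_prod_def)
    also have "\<dots> = (\<Sum>i\<in>{0..<n}. if i \<in> {a, b} then sg c i else 0)" using ab by (intro sum.cong) auto
    also have "\<dots> = sum (sg c) {i \<in> {0..<n}. i \<in> {a, b}}" by (rule sum.inter_filter[symmetric]) simp
    also have "{i \<in> {0..<n}. i \<in> {a, b}} = {a, b}" using ab by auto
    also have "sum (sg c) {a, b} = 0" using ab cab by (auto simp: sg_def)
    finally show "(transpose_mat M *\<^sub>v v) $ e = 0\<^sub>v m $ e" using e by simp
  qed (use d in simp)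
  have "X = X * (M * X)" using XP d unfolding is_MP_inverse_def by (simp add: assoc')
  also have "\<dots> = X * (transpose_mat X * transpose_mat M)" using XP d unfolding is_MP_inverse_def by (metis tmult')
  finally have XX: "X = X * (transpose_mat X * transpose_mat M)" .
  have Xv: "X *\<^sub>v v = 0\<^sub>v m"
  proof -
    have "X *\<^sub>v v = X *\<^sub>v (transpose_mat X *\<^sub>v (transpose_mat M *\<^sub>v v))"
      using d unfolding v_def by (subst XX) (simp add: assoc_vec')
    also have "\<dots> = 0\<^sub>v m" unfolding Mv using d by (simp add: mat_vec_zero')
    finally show ?thesis .
  qed
  have 1: "X * J = 0\<^sub>m m n"
  proof (rule eq_matI)
    fix e j assume ej: "e < dim_row (0\<^sub>m m n :: real mat)" "j < dim_col (0\<^sub>m m n :: real mat)"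
    hence "(X * J) $$ (e, j) = (\<Sum>i\<in>{0..<n}. X $$ (e, i) * (sg c i * sg c j))"
      using d unfolding J_def by (simp add: scalar_prod_def)
    also have "\<dots> = (\<Sum>i\<in>{0..<n}. X $$ (e, i) * sg c i) * sg c j"
      by (simp add: sum_distrib_right mult.assoc)
    also have "(\<Sum>i\<in>{0..<n}. X $$ (e, i) * sg c i) = (X *\<^sub>v v) $ e"
      using ej d unfolding v_def by (simp add: scalar_prod_def)
    finally show "(X * J) $$ (e, j) = 0\<^sub>m m n $$ (e, j)" using Xv ej by simp
  qed (use d in \<open>auto simp: J_def\<close>)
  have 2: "J * J = of_nat n \<cdot>\<^sub>m J"
  proof (rule eq_matI)
    fix i j assume ij: "i < dim_row (of_nat n \<cdot>\<^sub>m J)" "j < dim_col (of_nat n \<cdot>\<^sub>m J)"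
    hence "(J * J) $$ (i, j) = (\<Sum>k\<in>{0..<n}. (sg c i * sg c k) * (sg c k * sg c j))"
      unfolding J_def by (simp add: scalar_prod_def)
    also have "\<dots> = (\<Sum>k\<in>{0..<n}. sg c i * sg c j)"
    proof (rule sum.cong)
      fix k show "(sg c i * sg c k) * (sg c k * sg c j) = sg c i * sg c j"
        using sg_sq[of c k] by (metis mult.assoc mult.commute mult_1)
    qed simp
    finally show "(J * J) $$ (i, j) = (of_nat n \<cdot>\<^sub>m J) $$ (i, j)" using ij unfolding J_def by simp
  qed (auto simp: J_def)
  show ?thesis using 1 2 unfolding J[symmetric] X_def M_def m_def by simp
qed

end
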